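(* Fix a partition $\Delta=\{x_0<\dots<x_N\}$ of $[-\pi,\pi]$ and a scale vector $\alpha\in(-1,1)^N$. For $n\in\mathbb{N}$ let $\mathfrak{R}^\alpha_{\Delta,B_n}(2\pi)=\mathcal{F}^\alpha_{\Delta,B_n}(\mathfrak{R}(2\pi))$. Then $\bigcup_{n\in\mathbb{N}}\mathfrak{R}^\alpha_{\Delta,B_n}(2\pi)$ is dense in $\mathcal{C}(2\pi)$ (with respect to the sup norm).
   Context: Let $I=[x_0,x_N]=[-\pi,\pi]$, $N\ge2$, $\Delta=\{x_0<x_1<\dots<x_N\}$, $I_i=[x_{i-1},x_i]$, and $L_i(x)=a_ix+b_i$ the affine map of $I$ onto $I_i$ with $L_i(x_0)=x_{i-1}$, $L_i(x_N)=x_i$. For $f,b\in\mathcal{C}(I)$ with $b(x_0)=f(x_0)$, $b(x_N)=f(x_N)$ and $\alpha\in(-1,1)^N$, $f^\alpha_{\Delta,b}$ is the unique $g\in\mathcal{C}(I)$ with $g(x)=f(x)+\alpha_i(g-b)(L_i^{-1}(x))$ for $x\in I_i$, $i=1,\dots,N$. For a bounded linear $L$ with $(Lf)(x_0)=f(x_0)$, $(Lf)(x_N)=f(x_N)$, $\mathcal{F}^\alpha_{\Delta,L}(f)=f^\alpha_{\Delta,Lf}$. $B_n$ is the Bernstein operator on $I$: $B_nf(x)=\sum_{k=0}^n f\big(x_0+\tfrac{k}{n}(x_N-x_0)\big)\binom{n}{k}\frac{(x-x_0)^k(x_N-x)^{n-k}}{(x_N-x_0)^n}$. $\mathcal{C}(2\pi)=\{f\in\mathcal{C}([-\pi,\pi]):f(-\pi)=f(\pi)\}$,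 $\mathfrak{T}_m$ = real trigonometric polynomials of degree $\le m$, $\mathfrak{R}(2\pi)=\bigcup_{m,n}\{p/q:p\in\mathfrak{T}_m,q\in\mathfrak{T}_n,q>0\text{ on }[-\pi,\pi]\}$. *)

theory Defs
  imports "HOL-Analysis.Analysis"
begin

definition is_partition :: "(nat \<Rightarrow> real) \<Rightarrow> nat \<Rightarrow> bool" where
  "is_partition x N \<longleftrightarrow> N \<ge> 2 \<and> x 0 = -pi \<and> x N = pi \<and> (\<forall>i<N. x i < x (Suc i))"

text \<open>Affine map L_i of [x 0, x N] onto [x (i-1), x i], L_i(x) = a_i x + b_i.\<close>
definition affL :: "(nat \<Rightarrow> real) \<Rightarrow> nat \<Rightarrow> nat \<Rightarrow> real \<Rightarrow> real" where
  "affL x N i t = ((x i - x (i - 1)) / (x N - x 0)) * t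
                  + (x N * x (i - 1) - x 0 * x i) / (x N - x 0)"

definition affL_inv :: "(nat \<Rightarrow> real) \<Rightarrow> nat \<Rightarrow> nat \<Rightarrow> real \<Rightarrow> real" where
  "affL_inv x N i y = (y - (x N * x (i - 1) - x 0 * x i) / (x N - x 0))
                      / ((x i - x (i - 1)) / (x N - x 0))"

definition fractal_fun ::
  "(nat \<Rightarrow> real) \<Rightarrow> nat \<Rightarrow> (nat \<Rightarrow> real) \<Rightarrow> (real \<Rightarrow> real) \<Rightarrow> (real \<Rightarrow> real) \<Rightarrow> (real \<Rightarrow> real)" where
  "fractal_fun x N \<alpha> f b = (THE g. continuous_on {x 0..x N} g \<and>
      (\<forall>y. y \<notin> {x 0..x N} \<longrightarrow> g y = 0) \<and>
      (\<forall>i\<in>{1..N}. \<forall>y\<in>{x (i - 1)..x i}.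
          g y = f y + \<alpha> i * (g (affL_inv x N i y) - b (affL_inv x N i y))))"

definition bernstein :: "real \<Rightarrow> real \<Rightarrow> nat \<Rightarrow> (real \<Rightarrow> real) \<Rightarrow> real \<Rightarrow> real" where
  "bernstein a c n f t = (\<Sum>k=0..n. f (a + real k / real n * (c - a)) * real (n choose k)
        * (t - a) ^ k * (c - t) ^ (n - k) / (c - a) ^ n)"

definition fractal_op ::
  "(nat \<Rightarrow> real) \<Rightarrow> nat \<Rightarrow> (nat \<Rightarrow> real) \<Rightarrow> ((real \<Rightarrow> real) \<Rightarrow> (real \<Rightarrow> real))
     \<Rightarrow> (real \<Rightarrow> real) \<Rightarrow> (real \<Rightarrow> real)" where
  "fractal_op x N \<alpha> L f = fractal_fun x N \<alpha> f (L f)"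

definition trig_poly :: "nat \<Rightarrow> (real \<Rightarrow> real) set" where
  "trig_poly m = {p. \<exists>a b :: nat \<Rightarrow> real. \<forall>t.
       p t = a 0 + (\<Sum>k=1..m. a k * cos (real k * t) + b k * sin (real k * t))}"

definition trig_rat :: "(real \<Rightarrow> real) set" where
  "trig_rat = {r. \<exists>m n p q. p \<in> trig_poly m \<and> q \<in> trig_poly n \<and>
       (\<forall>t\<in>{-pi..pi}. q t > 0) \<and> r = (\<lambda>t. p t / q t)}"

definition fractal_trig_rat :: "(nat \<Rightarrow> real) \<Rightarrow> nat \<Rightarrow> (nat \<Rightarrow> real) \<Rightarrow> nat \<Rightarrow> (real \<Rightarrow> real) set" where
  "fractal_trig_rat x N \<alpha> n = fractal_op x N \<alpha> (bernstein (x 0) (x N) n) ` trig_rat"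

end

theory Submission
  imports Defs
begin


inductive_set Tind :: "(real \<Rightarrow> real) set" where
  tconst: "(\<lambda>t. c) \<in> Tind"
| tcos: "(\<lambda>t. cos (real k * t)) \<in> Tind"
| tsin: "(\<lambda>t. sin (real k * t)) \<in> Tind"
| tadd: "p \<in> Tind \<Longrightarrow> q \<in> Tind \<Longrightarrow> (\<lambda>t. p t + q t) \<in> Tind"
| tcmul: "p \<in> Tind \<Longrightarrow> (\<lambda>t. c * p t) \<in> Tind"

lemma cos_diff_nat: "cos ((real j - real k) * t) = cos (real (if k \<le> j then j - k else k - j) * t)"
proof (cases "k \<le> j")
  case True then show ?thesis by (simp add: of_nat_diff)
next
  case False
  then have "(real j - real k) * t = - (real (k - j) * t)" by (simp add: of_nat_diff algebra_simps)
  then show ?thesis using False by simp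
qed

lemma sin_diff_nat: "sin ((real j - real k) * t) = (if k \<le> j then 1 else -1) * sin (real (if k \<le> j then j - k else k - j) * t)"
proof (cases "k \<le> j")
  case True then show ?thesis by (simp add: of_nat_diff)
next
  case False
  then have "(real j - real k) * t = - (real (k - j) * t)" by (simp add: of_nat_diff algebra_simps)
  then show ?thesis using False by simp
qed

lemma Tind_cos_diff: "(\<lambda>t. cos ((real j - real k) * t)) \<in> Tind"
  unfolding cos_diff_nat by (rule tcos)

lemma Tind_sin_diff: "(\<lambda>t. sin ((real j - real k) * t)) \<in> Tind"
  unfolding sin_diff_nat by (intro tcmul tsin)

lemma Tind_cos_sum: "(\<lambda>t. cos ((real j + real k) * t)) \<in> Tind"
  using tcos[of "j+k"] by simp

lemma Tind_sin_sum: "(\<lambda>t. sin ((real j + real k) * t)) \<in> Tind"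
  using tsin[of "j+k"] by simp

lemma Tind_cc: "(\<lambda>t. cos (real j * t) * cos (real k * t)) \<in> Tind"
proof -
  have e: "cos (real j * t) * cos (real k * t) = (1/2) * cos ((real j + real k) * t) + (1/2) * cos ((real j - real k) * t)" for t
    by (simp add: distrib_right left_diff_distrib cos_add cos_diff field_simps)
  show ?thesis unfolding e by (intro tadd tcmul Tind_cos_sum Tind_cos_diff)
qed

lemma Tind_ss: "(\<lambda>t. sin (real j * t) * sin (real k * t)) \<in> Tind"
proof -
  have e: "sin (real j * t) * sin (real k * t) = (1/2) * cos ((real j - real k) * t) + (-1/2) * cos ((real j + real k) * t)" for t
    by (simp add: distrib_right left_diff_distrib cos_add cos_diff field_simps)
  show ?thesis unfolding e by (intro tadd tcmul Tind_cos_sum Tind_cos_diff)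
qed

lemma Tind_sc: "(\<lambda>t. sin (real j * t) * cos (real k * t)) \<in> Tind"
proof -
  have e: "sin (real j * t) * cos (real k * t) = (1/2) * sin ((real j + real k) * t) + (1/2) * sin ((real j - real k) * t)" for t
    by (simp add: distrib_right left_diff_distrib sin_add sin_diff field_simps)
  show ?thesis unfolding e by (intro tadd tcmul Tind_sin_sum Tind_sin_diff)
qed

lemma Tind_cs: "(\<lambda>t. cos (real j * t) * sin (real k * t)) \<in> Tind"
  using Tind_sc[of k j] by (simp add: mult.commute)

lemma Tind_mult_cos: "q \<in> Tind \<Longrightarrow> (\<lambda>t. cos (real j * t) * q t) \<in> Tind"
proof (induction rule: Tind.induct)
  case (tconst c) then show ?case using tcmul[OF tcos, of c j] by (simp add: mult.commute)
next
  case (tcos k) then show ?case by (rule Tind_cc)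
next
  case (tsin k) then show ?case by (rule Tind_cs)
next
  case (tadd p q) then show ?case using Tind.tadd[OF tadd.IH] by (simp add: distrib_left)
next
  case (tcmul p c) then show ?case using Tind.tcmul[OF tcmul.IH, of c] by (simp add: algebra_simps)
qed

lemma Tind_mult_sin: "q \<in> Tind \<Longrightarrow> (\<lambda>t. sin (real j * t) * q t) \<in> Tind"
proof (induction rule: Tind.induct)
  case (tconst c) then show ?case using tcmul[OF tsin, of c j] by (simp add: mult.commute)
next
  case (tcos k) then show ?case by (rule Tind_sc)
next
  case (tsin k) then show ?case by (rule Tind_ss)
next
  case (tadd p q) then show ?case using Tind.tadd[OF tadd.IH] by (simp add: distrib_left)
next
  case (tcmul p c) then show ?case using Tind.tcmul[OF tcmul.IH, of c] by (simp add: algebra_simps)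
qed

lemma Tind_mult: "p \<in> Tind \<Longrightarrow> q \<in> Tind \<Longrightarrow> (\<lambda>t. p t * q t) \<in> Tind"
proof (induction rule: Tind.induct)
  case (tconst c) then show ?case by (rule tcmul)
next
  case (tcos k) then show ?case by (rule Tind_mult_cos)
next
  case (tsin k) then show ?case by (rule Tind_mult_sin)
next
  case (tadd p1 p2) then show ?case using Tind.tadd[OF tadd.IH] by (simp add: distrib_right)
next
  case (tcmul p c) then show ?case using Tind.tcmul[OF tcmul.IH, of c] by (simp add: algebra_simps)
qed

lemma Tind_cont: "p \<in> Tind \<Longrightarrow> continuous_on S p"
  by (induction rule: Tind.induct) (auto intro!: continuous_intros)

lemma trig_poly_mono:
  assumes "p \<in> trig_poly m" "m \<le> m'" shows "p \<in> trig_poly m'"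
proof -
  obtain a b where ab: "\<And>t. p t = a 0 + (\<Sum>k=1..m. a k * cos (real k * t) + b k * sin (real k * t))"
    using assms(1) unfolding trig_poly_def by blast
  define a' where "a' = (\<lambda>k. if k \<le> m then a k else 0)"
  define b' where "b' = (\<lambda>k. if k \<le> m then b k else 0)"
  have "p t = a' 0 + (\<Sum>k=1..m'. a' k * cos (real k * t) + b' k * sin (real k * t))" for t
  proof -
    have "(\<Sum>k=1..m'. a' k * cos (real k * t) + b' k * sin (real k * t))
        = (\<Sum>k=1..m. a' k * cos (real k * t) + b' k * sin (real k * t))"
      by (rule sum.mono_neutral_right) (use assms(2) in \<open>auto simp: a'_def b'_def\<close>)
    also have "\<dots> = (\<Sum>k=1..m. a k * cos (real k * t) + b k * sin (real k * t))"
      by (rule sum.cong) (auto simp: a'_def b'_def)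
    finally show ?thesis using ab by (simp add: a'_def)
  qed
  then show ?thesis unfolding trig_poly_def by blast
qed

lemma trig_polyI:
  assumes "\<And>t. p t = a 0 + (\<Sum>k=1..m. a k * cos (real k * t) + b k * sin (real k * t))"
  shows "p \<in> trig_poly m"
  unfolding trig_poly_def using assms by blast

lemma Tind_trig_poly: "p \<in> Tind \<Longrightarrow> \<exists>m. p \<in> trig_poly m"
proof (induction rule: Tind.induct)
  case (tconst c)
  have "(\<lambda>t. c) \<in> trig_poly 0" by (rule trig_polyI[where a="\<lambda>_. c" and b="\<lambda>_. 0"]) simp
  then show ?case by blast
next
  case (tcos k)
  show ?case
  proof (cases "k = 0")
    case True
    have "(\<lambda>t. cos (real k * t)) \<in> trig_poly 0" by (rule trig_polyI[where a="\<lambda>_. 1" and b="\<lambda>_. 0"]) (simp add: True)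
    then show ?thesis by blast
  next
    case False
    define a where "a = (\<lambda>j::nat. if j = k then 1 else (0::real))"
    have "\<forall>t. cos (real k * t) = a 0 + (\<Sum>j=1..k. a j * cos (real j * t) + (\<lambda>_. 0) j * sin (real j * t))"
    proof
      fix t
      have "(\<Sum>j=1..k. a j * cos (real j * t) + (\<lambda>_. 0) j * sin (real j * t)) = (\<Sum>j=1..k. if j = k then cos (real j * t) else 0)"
        by (rule sum.cong) (auto simp: a_def)
      then show "cos (real k * t) = a 0 + (\<Sum>j=1..k. a j * cos (real j * t) + (\<lambda>_. 0) j * sin (real j * t))"
        using False by (simp add: a_def)
    qed
    then have "(\<lambda>t. cos (real k * t)) \<in> trig_poly k" by (intro trig_polyI[where a=a and b="\<lambda>_. 0"]) blast
    then show ?thesis by blast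
  qed
next
  case (tsin k)
  define b where "b = (\<lambda>j::nat. if j = k then 1 else (0::real))"
  have "\<forall>t. sin (real k * t) = (\<lambda>_. 0) 0 + (\<Sum>j=1..k. (\<lambda>_. 0) j * cos (real j * t) + b j * sin (real j * t))"
  proof
    fix t
    have "(\<Sum>j=1..k. (\<lambda>_. 0) j * cos (real j * t) + b j * sin (real j * t)) = (\<Sum>j=1..k. if j = k then sin (real j * t) else 0)"
      by (rule sum.cong) (auto simp: b_def)
    then show "sin (real k * t) = (\<lambda>_. 0) 0 + (\<Sum>j=1..k. (\<lambda>_. 0) j * cos (real j * t) + b j * sin (real j * t))"
      by (cases "k = 0") auto
  qed
  then have "(\<lambda>t. sin (real k * t)) \<in> trig_poly k" by (intro trig_polyI[where a="\<lambda>_. 0" and b=b]) blast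
  then show ?case by blast
next
  case (tadd p q)
  then obtain m n where "p \<in> trig_poly m" "q \<in> trig_poly n" by blast
  then have "p \<in> trig_poly (max m n)" "q \<in> trig_poly (max m n)" by (auto intro: trig_poly_mono)
  then obtain a b a' b' where
    "\<And>t. p t = a 0 + (\<Sum>k=1..max m n. a k * cos (real k * t) + b k * sin (real k * t))"
    "\<And>t. q t = a' 0 + (\<Sum>k=1..max m n. a' k * cos (real k * t) + b' k * sin (real k * t))"
    unfolding trig_poly_def by blast
  then have "\<forall>t. p t + q t = (\<lambda>k. a k + a' k) 0 + (\<Sum>k=1..max m n. (\<lambda>k. a k + a' k) k * cos (real k * t) + (\<lambda>k. b k + b' k) k * sin (real k * t))"
    by (simp add: sum.distrib algebra_simps)
  then have "(\<lambda>t. p t + q t) \<in> trig_poly (max m n)" by (intro trig_polyI[where a="\<lambda>k. a k + a' k" and b="\<lambda>k. b k + b' k"]) blast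
  then show ?case by blast
next
  case (tcmul p c)
  then obtain m a b where "\<And>t. p t = a 0 + (\<Sum>k=1..m. a k * cos (real k * t) + b k * sin (real k * t))"
    unfolding trig_poly_def by blast
  then have "\<forall>t. c * p t = (\<lambda>k. c * a k) 0 + (\<Sum>k=1..m. (\<lambda>k. c * a k) k * cos (real k * t) + (\<lambda>k. c * b k) k * sin (real k * t))"
    by (simp add: sum_distrib_left algebra_simps)
  then have "(\<lambda>t. c * p t) \<in> trig_poly m" by (intro trig_polyI[where a="\<lambda>k. c * a k" and b="\<lambda>k. c * b k"]) blast
  then show ?case by blast
qed

lemma Tind_trig_rat: "p \<in> Tind \<Longrightarrow> p \<in> trig_rat"
proof -
  assume "p \<in> Tind"
  then obtain m where m: "p \<in> trig_poly m" using Tind_trig_poly by blast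
  have "(\<lambda>_. 1) \<in> trig_poly 0" unfolding trig_poly_def by (rule CollectI, rule exI[of _ "\<lambda>_. 1"]) simp
  moreover have "p = (\<lambda>t. p t / 1)" by simp
  ultimately show ?thesis using m unfolding trig_rat_def by force
qed



lemma Arg_minus_one': "Arg (-1) = pi"
  using Arg_of_real[of "-1"] by simp

lemma cis_minus_pi: "cis (-pi) = -1"
  by (simp add: complex_eq_iff)

lemma trig_approx:
  assumes contf: "continuous_on {-pi..pi} f" and per: "f (-pi) = f pi" and e: "e > 0"
  shows "\<exists>p\<in>Tind. \<forall>t\<in>{-pi..pi}. \<bar>f t - p t\<bar> < e"
proof -
  define S where "S = sphere (0::complex) 1"
  define F where "F = (\<lambda>z. f (Arg z))"
  define A1 where "A1 = cis ` {0..pi}"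
  define A2 where "A2 = cis ` {-pi..0}"
  define g2 where "g2 = (\<lambda>z. if z = -1 then -pi else Arg z)"
  have ccis: "continuous_on T cis" for T by (intro continuous_intros)
  have cA1: "continuous_on A1 Arg"
    unfolding A1_def
  proof (rule continuous_on_inv[OF ccis])
    show "\<forall>x\<in>{0..pi}. Arg (cis x) = x"
    proof
      fix x :: real assume "x \<in> {0..pi}"
      then have "x \<in> {-pi<..pi}" using pi_gt_zero by (simp; linarith)
      then show "Arg (cis x) = x" by (rule Arg_cis)
    qed
  qed simp
  have iA1: "Arg ` A1 \<subseteq> {-pi..pi}"
  proof
    fix y assume "y \<in> Arg ` A1"
    then obtain z where "y = Arg z" by blast
    then show "y \<in> {-pi..pi}" using mpi_less_Arg[of z] Arg_le_pi[of z] by simp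
  qed
  have g2cis: "g2 (cis t) = t" if "t \<in> {-pi..0}" for t
  proof (cases "t = -pi")
    case True then show ?thesis by (simp add: g2_def cis_minus_pi)
  next
    case False
    have "-pi < t" using that False by auto
    moreover have "t \<le> pi" using that pi_gt_zero by (simp; linarith)
    ultimately have t: "t \<in> {-pi<..pi}" by simp
    then have "Arg (cis t) = t" by (rule Arg_cis)
    moreover have "cis t \<noteq> -1"
    proof
      assume "cis t = -1"
      then have "Arg (cis t) = pi" using Arg_minus_one' by simp
      then show False using \<open>Arg (cis t) = t\<close> that pi_gt_zero by auto
    qed
    ultimately show ?thesis by (simp add: g2_def)
  qed
  have cA2: "continuous_on A2 g2"
    unfolding A2_def by (rule continuous_on_inv[OF ccis]) (auto intro!: g2cis)
  have iA2: "g2 ` A2 \<subseteq> {-pi..pi}"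
    unfolding A2_def using g2cis pi_gt_zero by auto
  have F1: "continuous_on A1 F"
    unfolding F_def by (rule continuous_on_compose2[OF contf cA1 iA1])
  have F2: "continuous_on A2 F"
  proof -
    have c2: "continuous_on A2 (\<lambda>z. f (g2 z))"
      by (rule continuous_on_compose2[OF contf cA2 iA2])
    have eq: "F z = f (g2 z)" if "z \<in> A2" for z
    proof (cases "z = -1")
      case True then show ?thesis using per unfolding F_def g2_def by (simp add: Arg_minus_one')
    next
      case False then show ?thesis unfolding F_def g2_def by simp
    qed
    show ?thesis using continuous_on_cong[of A2 A2 F "\<lambda>z. f (g2 z)", OF refl eq] c2 by blast
  qed
  have cl1: "closed A1" unfolding A1_def by (intro compact_imp_closed compact_continuous_image ccis compact_Icc)
  have cl2: "closed A2" unfolding A2_def by (intro compact_imp_closed compact_continuous_image ccis compact_Icc)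
  have SA: "S = A1 \<union> A2"
  proof
    show "A1 \<union> A2 \<subseteq> S" unfolding S_def A1_def A2_def by auto
    show "S \<subseteq> A1 \<union> A2"
    proof
      fix z assume "z \<in> S"
      then have nz: "norm z = 1" by (simp add: S_def)
      then have "z \<noteq> 0" by auto
      then have z: "z = cis (Arg z)" using cis_Arg[of z] nz by (simp add: sgn_div_norm)
      show "z \<in> A1 \<union> A2"
      proof (cases "Arg z \<ge> 0")
        case True then have "Arg z \<in> {0..pi}" using Arg_le_pi by auto
        then show ?thesis unfolding A1_def using z by blast
      next
        case False then have "Arg z \<in> {-pi..0}" using mpi_less_Arg[of z] by auto
        then show ?thesis unfolding A2_def using z by blast
      qed
    qed
  qed
  have contF: "continuous_on S F"
    unfolding SA by (rule continuous_on_closed_Un[OF cl1 cl2 F1 F2])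
  define P where "P = (\<lambda>h. continuous_on S h \<and> (\<exists>p\<in>Tind. \<forall>t. h (cis t) = p t))"
  have "\<exists>h. P h \<and> (\<forall>z\<in>S. \<bar>F z - h z\<bar> < e)"
  proof (rule Stone_Weierstrass_HOL[OF _ _ _ _ _ _ contF e])
    show "compact S" by (simp add: S_def)
    show "P (\<lambda>x. c)" for c unfolding P_def by (auto intro: tconst)
    show "continuous_on S h" if "P h" for h using that by (simp add: P_def)
    show "P (\<lambda>x. h x + k x)" if hk: "P h \<and> P k" for h k
    proof -
      obtain p q where "p \<in> Tind" "q \<in> Tind" "\<And>t. h (cis t) = p t" "\<And>t. k (cis t) = q t"
        "continuous_on S h" "continuous_on S k" using hk unfolding P_def by blast
      then show ?thesis unfolding P_def
        by (intro conjI continuous_on_add bexI[of _ "\<lambda>t. p t + q t"] tadd) auto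
    qed
    show "P (\<lambda>x. h x * k x)" if hk: "P h \<and> P k" for h k
    proof -
      obtain p q where "p \<in> Tind" "q \<in> Tind" "\<And>t. h (cis t) = p t" "\<And>t. k (cis t) = q t"
        "continuous_on S h" "continuous_on S k" using hk unfolding P_def by blast
      then show ?thesis unfolding P_def
        by (intro conjI continuous_on_mult bexI[of _ "\<lambda>t. p t * q t"] Tind_mult) auto
    qed
    show "\<exists>h. P h \<and> h z \<noteq> h w" if "z \<in> S \<and> w \<in> S \<and> z \<noteq> w" for z w
    proof (cases "Re z = Re w")
      case True
      then have "Im z \<noteq> Im w" using that complex_eqI by blast
      moreover have "P Im" unfolding P_def
        using tsin[of 1] by (auto intro!: continuous_intros)
      ultimately show ?thesis by blast
    next
      case False
      moreover have "P Re" unfolding P_def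
        using tcos[of 1] by (auto intro!: continuous_intros)
      ultimately show ?thesis by blast
    qed
  qed
  then obtain h p where hp: "p \<in> Tind" "\<And>t. h (cis t) = p t" "\<And>z. z \<in> S \<Longrightarrow> \<bar>F z - h z\<bar> < e"
    unfolding P_def by blast
  have "\<bar>f t - p t\<bar> < e" if t: "t \<in> {-pi..pi}" for t
  proof -
    have "F (cis t) = f t"
    proof (cases "t = -pi")
      case True then show ?thesis by (simp add: F_def cis_minus_pi Arg_minus_one' per)
    next
      case False then have "t \<in> {-pi<..pi}" using t by auto
      then show ?thesis by (simp add: F_def Arg_cis)
    qed
    moreover have "cis t \<in> S" by (simp add: S_def)
    ultimately show ?thesis using hp(2)[of t] hp(3)[of "cis t"] by simp
  qed
  then show ?thesis using hp(1) by blast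
qed



lemma bernstein_cont: "a \<noteq> c \<Longrightarrow> continuous_on S (bernstein a c n r)"
  unfolding bernstein_def by (intro continuous_intros) auto

lemma bernstein_left: "a \<noteq> c \<Longrightarrow> bernstein a c n r a = r a"
proof -
  assume ac: "a \<noteq> c"
  have "bernstein a c n r a = (\<Sum>k=0..n. if k = 0 then r a else 0)"
    unfolding bernstein_def
    by (rule sum.cong) (use ac in \<open>auto simp: power_0_left\<close>)
  then show ?thesis by simp
qed

lemma bernstein_right: "a \<noteq> c \<Longrightarrow> n \<ge> 1 \<Longrightarrow> bernstein a c n r c = r c"
proof -
  assume ac: "a \<noteq> c" and n: "n \<ge> 1"
  have "bernstein a c n r c = (\<Sum>k=0..n. if k = n then r c else 0)"
    unfolding bernstein_def
  proof (rule sum.cong)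
    fix k assume k: "k \<in> {0..n}"
    show "r (a + real k / real n * (c - a)) * real (n choose k) * (c - a) ^ k * (c - c) ^ (n - k) / (c - a) ^ n =
         (if k = n then r c else 0)"
    proof (cases "k = n")
      case True then show ?thesis using ac n by simp
    next
      case False then have "n - k \<noteq> 0" using k by auto
      then show ?thesis using False by simp
    qed
  qed simp
  then show ?thesis using n by simp
qed

lemma bernstein_conv:
  assumes ac: "a < c" and contr: "continuous_on {a..c} r" and e: "e > 0"
  shows "\<exists>n0. \<forall>n\<ge>n0. \<forall>t\<in>{a..c}. \<bar>r t - bernstein a c n r t\<bar> < e"
proof -
  define \<phi> where "\<phi> = (\<lambda>s. r (a + s * (c - a)))"
  have "continuous_on {0..1} \<phi>"
    unfolding \<phi>_def
  proof (rule continuous_on_compose2[OF contr])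
    show "continuous_on {0..1} (\<lambda>s. a + s * (c - a))" by (intro continuous_intros)
    show "(\<lambda>s. a + s * (c - a)) ` {0..1} \<subseteq> {a..c}"
    proof
      fix y assume "y \<in> (\<lambda>s. a + s * (c - a)) ` {0..1}"
      then obtain s where s: "s \<in> {0..1}" "y = a + s * (c - a)" by blast
      have "0 \<le> s * (c - a)" using s ac by auto
      moreover have "s * (c - a) \<le> 1 * (c - a)" using s ac by (intro mult_right_mono) auto
      ultimately show "y \<in> {a..c}" using s by auto
    qed
  qed
  from Bernstein_Weierstrass[OF this e] obtain N where
    N: "\<And>n x. N \<le> n \<Longrightarrow> x \<in> {0..1} \<Longrightarrow> \<bar>\<phi> x - (\<Sum>k\<le>n. \<phi> (real k / real n) * Bernstein n k x)\<bar> < e"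
    by blast
  have "\<bar>r t - bernstein a c n r t\<bar> < e" if n: "N \<le> n" and t: "t \<in> {a..c}" for n t
  proof -
    define s where "s = (t - a) / (c - a)"
    have s01: "s \<in> {0..1}" using t ac by (auto simp: s_def field_simps)
    have phis: "\<phi> s = r t" using ac by (simp add: \<phi>_def s_def)
    have "bernstein a c n r t = (\<Sum>k\<le>n. \<phi> (real k / real n) * Bernstein n k s)"
      unfolding bernstein_def atMost_atLeast0
    proof (rule sum.cong[OF refl])
      fix k assume k: "k \<in> {0..n}"
      have ca: "c - a \<noteq> 0" using ac by auto
      have "1 - s = (c - t) / (c - a)" using ca by (simp add: s_def field_simps)
      then have "s ^ k * (1 - s) ^ (n - k) = (t - a) ^ k * (c - t) ^ (n - k) / ((c - a) ^ k * (c - a) ^ (n - k))"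
        by (simp add: s_def power_divide)
      also have "(c - a) ^ k * (c - a) ^ (n - k) = (c - a) ^ n"
        using k by (simp add: power_add[symmetric])
      finally have sk: "s ^ k * (1 - s) ^ (n - k) = (t - a) ^ k * (c - t) ^ (n - k) / (c - a) ^ n" .
      show "r (a + real k / real n * (c - a)) * real (n choose k) * (t - a) ^ k * (c - t) ^ (n - k) / (c - a) ^ n
          = \<phi> (real k / real n) * Bernstein n k s"
      proof -
        have B: "Bernstein n k s = real (n choose k) * ((t - a) ^ k * (c - t) ^ (n - k) / (c - a) ^ n)"
          by (simp add: Bernstein_def mult.assoc sk)
        show ?thesis by (simp add: \<phi>_def B algebra_simps diff_divide_distrib)
      qed
    qed
    then show ?thesis using N[OF n s01] phis by simp
  qed
  then show ?thesis by blast
qed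



locale frac =
  fixes x :: "nat \<Rightarrow> real" and N :: nat and \<alpha> :: "nat \<Rightarrow> real"
  assumes N1: "N \<ge> 1" and xmono: "\<forall>i<N. x i < x (Suc i)"
    and alpha: "\<forall>i\<in>{1..N}. \<alpha> i \<in> {-1<..<1}"
begin

definition M :: real where "M = Max ((\<lambda>i. \<bar>\<alpha> i\<bar>) ` {1..N})"

definition ix :: "real \<Rightarrow> nat" where "ix y = (LEAST i. 1 \<le> i \<and> y \<le> x i)"

definition isfrac :: "(real \<Rightarrow> real) \<Rightarrow> (real \<Rightarrow> real) \<Rightarrow> (real \<Rightarrow> real) \<Rightarrow> bool" where
  "isfrac f b g \<longleftrightarrow> continuous_on {x 0..x N} g \<and>
      (\<forall>y. y \<notin> {x 0..x N} \<longrightarrow> g y = 0) \<and>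
      (\<forall>i\<in>{1..N}. \<forall>y\<in>{x (i - 1)..x i}.
          g y = f y + \<alpha> i * (g (affL_inv x N i y) - b (affL_inv x N i y)))"

lemma fractal_fun_eq: "fractal_fun x N \<alpha> f b = (THE g. isfrac f b g)"
  unfolding fractal_fun_def isfrac_def ..

definition T :: "(real \<Rightarrow> real) \<Rightarrow> (real \<Rightarrow> real) \<Rightarrow> (real \<Rightarrow> real) \<Rightarrow> real \<Rightarrow> real" where
  "T f b g y = f y + \<alpha> (ix y) * (g (affL_inv x N (ix y) y) - b (affL_inv x N (ix y) y))"

lemma xless: "i < j \<Longrightarrow> j \<le> N \<Longrightarrow> x i < x j"
proof (induction j)
  case 0 then show ?case by simp
next
  case (Suc j)
  then have "x j < x (Suc j)" using xmono by auto
  then show ?case using Suc by (cases "i = j") auto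
qed

lemma xle: "i \<le> j \<Longrightarrow> j \<le> N \<Longrightarrow> x i \<le> x j"
  using xless by (cases "i = j") (auto simp: less_imp_le)

lemma x0N: "x 0 < x N" using xless N1 by auto

lemma M_props: "0 \<le> M" "M < 1" "\<And>i. i \<in> {1..N} \<Longrightarrow> \<bar>\<alpha> i\<bar> \<le> M"
proof -
  have fin: "finite ((\<lambda>i. \<bar>\<alpha> i\<bar>) ` {1..N})" and ne: "(\<lambda>i. \<bar>\<alpha> i\<bar>) ` {1..N} \<noteq> {}" using N1 by auto
  show le: "\<bar>\<alpha> i\<bar> \<le> M" if "i \<in> {1..N}" for i
    unfolding M_def using that fin by (intro Max_ge) auto
  show "0 \<le> M" using le[of 1] N1 by auto
  have "M \<in> (\<lambda>i. \<bar>\<alpha> i\<bar>) ` {1..N}" unfolding M_def using fin ne by (rule Max_in)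
  then show "M < 1" using alpha by auto
qed

lemma Linv_formula:
  assumes "i \<in> {1..N}"
  shows "affL_inv x N i y = x 0 + (y - x (i - 1)) * ((x N - x 0) / (x i - x (i - 1)))"
proof -
  have h: "x (i - 1) < x i" using assms xless[of "i - 1" i] by auto
  have c: "x 0 < x N" by (rule x0N)
  define A where "A = x 0"
  define C where "C = x N"
  define p where "p = x (i - 1)"
  define q where "q = x i"
  define K where "K = C * p - A * q"
  have D: "C - A \<noteq> 0" and hh: "q - p \<noteq> 0" using h c by (auto simp: A_def C_def p_def q_def)
  have "affL_inv x N i y = (y - K / (C - A)) / ((q - p) / (C - A))"
    unfolding affL_inv_def A_def C_def p_def q_def K_def ..
  also have "\<dots> = (y * (C - A) - K) / (q - p)"
  proof -
    have "y - K / (C - A) = (y * (C - A) - K) / (C - A)" using D by (simp add: diff_divide_distrib)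
    then show ?thesis using D hh by simp
  qed
  also have "y * (C - A) - K = A * (q - p) + (y - p) * (C - A)" by (simp add: K_def algebra_simps)
  also have "(A * (q - p) + (y - p) * (C - A)) / (q - p) = A + (y - p) * ((C - A) / (q - p))"
    using hh by (simp add: field_simps)
  finally show ?thesis by (simp add: A_def C_def p_def q_def)
qed

lemma Linv_left: "i \<in> {1..N} \<Longrightarrow> affL_inv x N i (x (i - 1)) = x 0"
  by (simp add: Linv_formula)

lemma Linv_right: "i \<in> {1..N} \<Longrightarrow> affL_inv x N i (x i) = x N"
proof -
  assume i: "i \<in> {1..N}"
  have h: "x (i - 1) < x i" using i xless[of "i - 1" i] by auto
  show ?thesis using h by (simp add: Linv_formula[OF i])
qed

lemma Linv_maps:
  assumes i: "i \<in> {1..N}" and y: "y \<in> {x (i - 1)..x i}"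
  shows "affL_inv x N i y \<in> {x 0..x N}"
proof -
  have h: "x (i - 1) < x i" using i xless[of "i - 1" i] by auto
  have c: "x 0 < x N" by (rule x0N)
  define q where "q = (x N - x 0) / (x i - x (i - 1))"
  have q: "q > 0" using h c by (simp add: q_def)
  have "0 \<le> (y - x (i - 1)) * q" using y q by auto
  moreover have "(y - x (i - 1)) * q \<le> (x i - x (i - 1)) * q" using y q by (intro mult_right_mono) auto
  moreover have "(x i - x (i - 1)) * q = x N - x 0" using h by (simp add: q_def)
  moreover have "affL_inv x N i y = x 0 + (y - x (i - 1)) * q" by (simp add: Linv_formula[OF i] q_def)
  ultimately show ?thesis by simp
qed

lemma Linv_cont: "i \<in> {1..N} \<Longrightarrow> continuous_on S (affL_inv x N i)"
proof -
  assume i: "i \<in> {1..N}"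
  have "continuous_on S (\<lambda>y. x 0 + (y - x (i - 1)) * ((x N - x 0) / (x i - x (i - 1))))"
    by (intro continuous_intros)
  then show ?thesis by (simp add: Linv_formula[OF i])
qed

lemma cover:
  assumes y: "y \<in> {x 0..x N}"
  shows "ix y \<in> {1..N}" "y \<in> {x (ix y - 1)..x (ix y)}"
proof -
  have PN: "1 \<le> N \<and> y \<le> x N" using N1 y by auto
  have P: "1 \<le> ix y \<and> y \<le> x (ix y)" unfolding ix_def by (rule LeastI[of _ N], rule PN)
  have le: "ix y \<le> N" unfolding ix_def by (rule Least_le, rule PN)
  show "ix y \<in> {1..N}" using P le by auto
  have "x (ix y - 1) \<le> y"
  proof (cases "ix y = 1")
    case True then show ?thesis using y by simp
  next
    case False
    then have "ix y - 1 < ix y" "1 \<le> ix y - 1" using P by auto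
    from not_less_Least[of "ix y - 1" "\<lambda>i. 1 \<le> i \<and> y \<le> x i"] this(1)
    have "\<not> (1 \<le> ix y - 1 \<and> y \<le> x (ix y - 1))"
      unfolding ix_def by simp
    then show ?thesis using \<open>1 \<le> ix y - 1\<close> by auto
  qed
  then show "y \<in> {x (ix y - 1)..x (ix y)}" using P by auto
qed

lemma cover_ex: "y \<in> {x 0..x N} \<Longrightarrow> \<exists>j\<in>{1..N}. y \<in> {x (j - 1)..x j}"
  using cover by blast

lemma cons:
  assumes j: "j \<in> {1..N}" and y: "y \<in> {x (j - 1)..x j}"
    and g0: "g (x 0) = b (x 0)" and gN: "g (x N) = b (x N)"
  shows "T f b g y = f y + \<alpha> j * (g (affL_inv x N j y) - b (affL_inv x N j y))"
proof -
  have "x 0 \<le> x (j - 1)" "x j \<le> x N" using j by (auto intro!: xle)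
  then have yI: "y \<in> {x 0..x N}" using y by auto
  define i where "i = ix y"
  have i: "i \<in> {1..N}" "y \<in> {x (i - 1)..x i}" using cover[OF yI] by (auto simp: i_def)
  have "i \<le> j" unfolding i_def ix_def by (rule Least_le) (use j y in auto)
  show ?thesis
  proof (cases "i = j")
    case True then show ?thesis by (simp add: T_def i_def)
  next
    case False
    with \<open>i \<le> j\<close> have ij: "i \<le> j - 1" by auto
    have "x i \<le> x (j - 1)" using ij j by (intro xle) auto
    then have yeq: "y = x (j - 1)" "x i = x (j - 1)" using i y by auto
    have "i = j - 1"
    proof (rule ccontr)
      assume "i \<noteq> j - 1"
      then have "x i < x (j - 1)" using ij j by (intro xless) auto
      then show False using yeq by simp
    qed
    then have "affL_inv x N i y = x N" using Linv_right[OF i(1)] yeq by simp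
    moreover have "affL_inv x N j y = x 0" using Linv_left[OF j] yeq by simp
    ultimately show ?thesis using g0 gN by (simp add: T_def i_def[symmetric])
  qed
qed

lemma I_Union: "{x 0..x N} = (\<Union>j\<in>{1..N}. {x (j - 1)..x j})"
proof
  show "{x 0..x N} \<subseteq> (\<Union>j\<in>{1..N}. {x (j - 1)..x j})" using cover_ex by blast
  show "(\<Union>j\<in>{1..N}. {x (j - 1)..x j}) \<subseteq> {x 0..x N}"
  proof
    fix y assume "y \<in> (\<Union>j\<in>{1..N}. {x (j - 1)..x j})"
    then obtain j where j: "j \<in> {1..N}" "y \<in> {x (j - 1)..x j}" by blast
    have "x 0 \<le> x (j - 1)" "x j \<le> x N" using j by (auto intro!: xle)
    then show "y \<in> {x 0..x N}" using j by auto
  qed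
qed

lemma T_cont:
  assumes cf: "continuous_on {x 0..x N} f" and cb: "continuous_on {x 0..x N} b"
    and cg: "continuous_on {x 0..x N} g"
    and g0: "g (x 0) = b (x 0)" and gN: "g (x N) = b (x N)"
  shows "continuous_on {x 0..x N} (T f b g)"
  unfolding I_Union
proof (rule continuous_on_closed_Union)
  fix j assume j: "j \<in> {1..N}"
  let ?P = "{x (j - 1)..x j}"
  have sub: "?P \<subseteq> {x 0..x N}" using I_Union j by blast
  have im: "affL_inv x N j ` ?P \<subseteq> {x 0..x N}" using Linv_maps[OF j] by blast
  have "continuous_on ?P (\<lambda>y. f y + \<alpha> j * (g (affL_inv x N j y) - b (affL_inv x N j y)))"
    by (intro continuous_intros continuous_on_subset[OF cf sub]
        continuous_on_compose2[OF cg Linv_cont[OF j] im] continuous_on_compose2[OF cb Linv_cont[OF j] im])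
  then show "continuous_on ?P (T f b g)"
    using continuous_on_cong[of ?P ?P "T f b g", OF refl cons[OF j _ g0 gN]] by blast
qed auto

lemma T_ends:
  assumes g0: "g (x 0) = b (x 0)" and gN: "g (x N) = b (x N)"
  shows "T f b g (x 0) = f (x 0)" "T f b g (x N) = f (x N)"
proof -
  have j1: "1 \<in> {1..N}" using N1 by auto
  have "x 0 \<le> x 1" using xle[of 0 1] N1 by auto
  then have "T f b g (x 0) = f (x 0) + \<alpha> 1 * (g (affL_inv x N 1 (x 0)) - b (affL_inv x N 1 (x 0)))"
    using cons[OF j1 _ g0 gN] by simp
  also have "affL_inv x N 1 (x 0) = x 0" using Linv_left[OF j1] by simp
  finally show "T f b g (x 0) = f (x 0)" using g0 by simp
  have jN: "N \<in> {1..N}" using N1 by auto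
  have "x (N - 1) \<le> x N" using xle[of "N - 1" N] by auto
  then have "T f b g (x N) = f (x N) + \<alpha> N * (g (affL_inv x N N (x N)) - b (affL_inv x N N (x N)))"
    using cons[OF jN _ g0 gN] by simp
  also have "affL_inv x N N (x N) = x N" using Linv_right[OF jN] by simp
  finally show "T f b g (x N) = f (x N)" using gN by simp
qed

lemma uniq:
  assumes "isfrac f b g1" "isfrac f b g2"
  shows "g1 = g2"
proof -
  define h where "h = (\<lambda>y. g1 y - g2 y)"
  have ch: "continuous_on {x 0..x N} (\<lambda>y. \<bar>h y\<bar>)"
    using assms unfolding isfrac_def h_def by (intro continuous_intros) auto
  obtain y0 where y0: "y0 \<in> {x 0..x N}" "\<And>y. y \<in> {x 0..x N} \<Longrightarrow> \<bar>h y\<bar> \<le> \<bar>h y0\<bar>"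
    using continuous_attains_sup[OF compact_Icc _ ch] x0N by fastforce
  obtain j where j: "j \<in> {1..N}" "y0 \<in> {x (j - 1)..x j}" using cover_ex[OF y0(1)] by blast
  define z where "z = affL_inv x N j y0"
  have zI: "z \<in> {x 0..x N}" unfolding z_def by (rule Linv_maps[OF j])
  have e1: "g1 y0 = f y0 + \<alpha> j * (g1 z - b z)" using assms(1) j unfolding isfrac_def z_def by blast
  have e2: "g2 y0 = f y0 + \<alpha> j * (g2 z - b z)" using assms(2) j unfolding isfrac_def z_def by blast
  have "h y0 = \<alpha> j * h z" unfolding h_def e1 e2 by (simp add: algebra_simps)
  then have "\<bar>h y0\<bar> = \<bar>\<alpha> j\<bar> * \<bar>h z\<bar>" by (simp add: abs_mult)
  also have "\<dots> \<le> M * \<bar>h y0\<bar>"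
    using M_props(3)[OF j(1)] y0(2)[OF zI] by (intro mult_mono) auto
  finally have "(1 - M) * \<bar>h y0\<bar> \<le> 0" by (simp add: algebra_simps)
  then have "\<bar>h y0\<bar> \<le> 0" using M_props(2) by (simp add: mult_le_0_iff)
  then have "\<forall>y\<in>{x 0..x N}. h y = 0" using y0(2) by fastforce
  moreover have "\<forall>y. y \<notin> {x 0..x N} \<longrightarrow> h y = 0" using assms unfolding isfrac_def h_def by auto
  ultimately show ?thesis unfolding h_def by (metis eq_iff_diff_eq_0 ext)
qed


lemma exist:
  assumes cf: "continuous_on {x 0..x N} f" and cb: "continuous_on {x 0..x N} b"
    and f0: "b (x 0) = f (x 0)" and fN: "b (x N) = f (x N)"
    and D: "\<forall>y\<in>{x 0..x N}. \<bar>f y - b y\<bar> \<le> D"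
  shows "\<exists>g. isfrac f b g"
proof -
  let ?I = "{x 0..x N}"
  define G where "G = (\<lambda>k. (T f b ^^ k) f)"
  have G0: "G 0 = f" and GS: "\<And>k. G (Suc k) = T f b (G k)" by (simp_all add: G_def)
  have inv: "continuous_on ?I (G k) \<and> G k (x 0) = b (x 0) \<and> G k (x N) = b (x N)" for k
  proof (induction k)
    case 0 then show ?case using cf f0 fN by (simp add: G0)
  next
    case (Suc k)
    then show ?case using T_cont[OF cf cb, of "G k"] T_ends[of "G k" b f] f0 fN by (simp add: GS)
  qed
  have Tdiff: "T f b g1 y - T f b g2 y = \<alpha> (ix y) * (g1 (affL_inv x N (ix y) y) - g2 (affL_inv x N (ix y) y))" for g1 g2 y
    by (simp add: T_def algebra_simps)
  have bound: "\<forall>y\<in>?I. \<bar>G (Suc k) y - G k y\<bar> \<le> D * M ^ k" for k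
  proof (induction k)
    case 0
    show ?case
    proof
      fix y assume y: "y \<in> ?I"
      define z where "z = affL_inv x N (ix y) y"
      have zI: "z \<in> ?I" unfolding z_def using Linv_maps cover[OF y] by blast
      have "\<bar>G (Suc 0) y - G 0 y\<bar> = \<bar>\<alpha> (ix y)\<bar> * \<bar>f z - b z\<bar>"
        by (simp add: GS G0 T_def z_def abs_mult)
      also have "\<dots> \<le> 1 * D"
        using M_props(2) M_props(3)[of "ix y"] cover(1)[OF y] D zI by (intro mult_mono) auto
      finally show "\<bar>G (Suc 0) y - G 0 y\<bar> \<le> D * M ^ 0" by simp
    qed
  next
    case (Suc k)
    show ?case
    proof
      fix y assume y: "y \<in> ?I"
      define z where "z = affL_inv x N (ix y) y"
      have zI: "z \<in> ?I" unfolding z_def using Linv_maps cover[OF y] by blast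
      have "\<bar>G (Suc (Suc k)) y - G (Suc k) y\<bar> = \<bar>\<alpha> (ix y)\<bar> * \<bar>G (Suc k) z - G k z\<bar>"
        unfolding GS[of "Suc k"] GS[of k] Tdiff z_def[symmetric] by (simp add: abs_mult)
      also have "\<dots> \<le> M * (D * M ^ k)"
        using M_props(1) M_props(3)[of "ix y"] cover(1)[OF y] Suc zI by (intro mult_mono) auto
      finally show "\<bar>G (Suc (Suc k)) y - G (Suc k) y\<bar> \<le> D * M ^ Suc k" by (simp add: algebra_simps)
    qed
  qed
  define d where "d = (\<lambda>j y. G (Suc j) y - G j y)"
  have summ: "summable (\<lambda>j. D * M ^ j)"
    using M_props(1,2) by (intro summable_mult summable_geometric) auto
  have UL0: "uniform_limit ?I (\<lambda>n y. \<Sum>j<n. d j y) (\<lambda>y. \<Sum>j. d j y) sequentially"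
    by (rule Weierstrass_m_test[OF _ summ]) (use bound in \<open>auto simp: d_def\<close>)
  have UL1: "uniform_limit ?I (\<lambda>n y. f y + (\<Sum>j<n. d j y)) (\<lambda>y. f y + (\<Sum>j. d j y)) sequentially"
    using uniform_limit_add[OF uniform_limit_const UL0] .
  have Geq: "G = (\<lambda>n y. f y + (\<Sum>j<n. d j y))"
  proof (intro ext)
    fix n y
    have "(\<Sum>j<n. d j y) = G n y - G 0 y" unfolding d_def by (rule sum_lessThan_telescope)
    then show "G n y = f y + (\<Sum>j<n. d j y)" by (simp add: G0)
  qed
  define g where "g = (\<lambda>y. f y + (\<Sum>j. d j y))"
  have ULG: "uniform_limit ?I G g sequentially" using UL1 unfolding Geq g_def .
  have cg: "continuous_on ?I g"
    by (rule uniform_limit_theorem[OF _ ULG]) (use inv in \<open>auto intro: always_eventually\<close>)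
  have lim: "(\<lambda>n. G n y) \<longlonglongrightarrow> g y" if "y \<in> ?I" for y
    by (rule tendsto_uniform_limitI[OF ULG that])
  define h where "h = (\<lambda>y. if y \<in> ?I then g y else 0)"
  have "isfrac f b h"
    unfolding isfrac_def
  proof (intro conjI allI impI ballI)
    show "continuous_on ?I h" using continuous_on_cong[of ?I ?I h g] cg by (simp add: h_def)
    show "h y = 0" if "y \<notin> ?I" for y using that unfolding h_def by auto
    fix j y assume j: "j \<in> {1..N}" and y: "y \<in> {x (j - 1)..x j}"
    have "x 0 \<le> x (j - 1)" "x j \<le> x N" using j by (auto intro!: xle)
    then have yI: "y \<in> ?I" using y by auto
    define z where "z = affL_inv x N j y"
    have zI: "z \<in> ?I" unfolding z_def by (rule Linv_maps[OF j y])
    have eqn: "G (Suc n) y = f y + \<alpha> j * (G n z - b z)" for n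
      unfolding GS z_def using cons[OF j y] inv by blast
    have l1: "(\<lambda>n. G (Suc n) y) \<longlonglongrightarrow> g y" using lim[OF yI] by (rule LIMSEQ_Suc)
    have l2: "(\<lambda>n. G (Suc n) y) \<longlonglongrightarrow> f y + \<alpha> j * (g z - b z)"
      unfolding eqn by (intro tendsto_intros lim[OF zI])
    have "g y = f y + \<alpha> j * (g z - b z)" using LIMSEQ_unique[OF l1 l2] .
    then show "h y = f y + \<alpha> j * (h (affL_inv x N j y) - b (affL_inv x N j y))"
      using yI zI by (simp add: h_def z_def)
  qed
  then show ?thesis by blast
qed

lemma estimate:
  assumes cf: "continuous_on {x 0..x N} f" and cb: "continuous_on {x 0..x N} b"
    and f0: "b (x 0) = f (x 0)" and fN: "b (x N) = f (x N)"
    and D: "\<forall>y\<in>{x 0..x N}. \<bar>f y - b y\<bar> \<le> D"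
  shows "\<forall>y\<in>{x 0..x N}. \<bar>fractal_fun x N \<alpha> f b y - f y\<bar> \<le> M * D / (1 - M)"
proof -
  let ?I = "{x 0..x N}"
  obtain g where g: "isfrac f b g" using exist[OF assms] by blast
  have ff: "fractal_fun x N \<alpha> f b = g"
    unfolding fractal_fun_eq by (rule the_equality[where P="isfrac f b", OF g]) (use uniq g in blast)
  have ch: "continuous_on ?I (\<lambda>y. \<bar>g y - f y\<bar>)"
    using g cf unfolding isfrac_def by (intro continuous_intros) auto
  obtain y0 where y0: "y0 \<in> ?I" "\<And>y. y \<in> ?I \<Longrightarrow> \<bar>g y - f y\<bar> \<le> \<bar>g y0 - f y0\<bar>"
    using continuous_attains_sup[OF compact_Icc _ ch] x0N by fastforce
  obtain j where j: "j \<in> {1..N}" "y0 \<in> {x (j - 1)..x j}" using cover_ex[OF y0(1)] by blast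
  define z where "z = affL_inv x N j y0"
  have zI: "z \<in> ?I" unfolding z_def by (rule Linv_maps[OF j])
  define E where "E = \<bar>g y0 - f y0\<bar>"
  have e1: "g y0 = f y0 + \<alpha> j * (g z - b z)" using g j unfolding isfrac_def z_def by blast
  have "E = \<bar>\<alpha> j\<bar> * \<bar>(g z - f z) + (f z - b z)\<bar>" unfolding E_def e1 by (simp add: abs_mult)
  also have "\<dots> \<le> M * (E + D)"
  proof (rule mult_mono)
    show "\<bar>\<alpha> j\<bar> \<le> M" using M_props(3)[OF j(1)] .
    have "\<bar>(g z - f z) + (f z - b z)\<bar> \<le> \<bar>g z - f z\<bar> + \<bar>f z - b z\<bar>" by (rule abs_triangle_ineq)
    also have "\<dots> \<le> E + D" using y0(2)[OF zI] D zI by (auto simp: E_def intro: add_mono)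
    finally show "\<bar>(g z - f z) + (f z - b z)\<bar> \<le> E + D" .
  qed (use M_props in auto)
  finally have "E * (1 - M) \<le> M * D" by (simp add: algebra_simps)
  then have EM: "E \<le> M * D / (1 - M)" using M_props(2) by (simp add: pos_le_divide_eq)
  show ?thesis unfolding ff using y0(2) EM by (force simp: E_def)
qed

end


theorem mainTheorem3:
  fixes x :: "nat \<Rightarrow> real" and N :: nat and \<alpha> :: "nat \<Rightarrow> real"
  assumes "is_partition x N"
    and "\<forall>i\<in>{1..N}. \<alpha> i \<in> {-1<..<1}"
  shows "\<forall>f. continuous_on {-pi..pi} f \<and> f (-pi) = f pi \<longrightarrow>
           (\<forall>\<epsilon>>0. \<exists>g\<in>(\<Union>n\<in>{1..}. fractal_trig_rat x N \<alpha> n).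
              \<forall>t\<in>{-pi..pi}. \<bar>f t - g t\<bar> < \<epsilon>)"
proof (intro allI impI)
  fix f :: "real \<Rightarrow> real" and \<epsilon> :: real
  assume fa: "continuous_on {-pi..pi} f \<and> f (-pi) = f pi" and e: "\<epsilon> > 0"
  have P: "N \<ge> 2" "x 0 = -pi" "x N = pi" "\<forall>i<N. x i < x (Suc i)"
    using assms(1) unfolding is_partition_def by auto
  interpret frac x N \<alpha> using P assms(2) by unfold_locales auto
  have I: "{x 0..x N} = {-pi..pi}" using P by simp
  obtain p where p: "p \<in> Tind" "\<And>t. t \<in> {-pi..pi} \<Longrightarrow> \<bar>f t - p t\<bar> < \<epsilon> / 2"
    using trig_approx[of f "\<epsilon> / 2"] fa e by auto
  define K where "K = M / (1 - M)"
  have K0: "0 \<le> K" using M_props(1,2) by (simp add: K_def)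
  define \<delta> where "\<delta> = \<epsilon> / (2 * (K + 1))"
  have d0: "\<delta> > 0" using K0 e by (simp add: \<delta>_def)
  have Kd: "K * \<delta> < \<epsilon> / 2"
  proof -
    have "K * \<delta> = (\<epsilon> / 2) * (K / (K + 1))" using K0 by (simp add: \<delta>_def field_simps)
    also have "\<dots> < (\<epsilon> / 2) * 1" using K0 e by (intro mult_strict_left_mono) auto
    finally show ?thesis by simp
  qed
  have cp: "continuous_on {x 0..x N} p" using Tind_cont[OF p(1)] .
  obtain n0 where n0: "\<And>n t. n \<ge> n0 \<Longrightarrow> t \<in> {x 0..x N} \<Longrightarrow> \<bar>p t - bernstein (x 0) (x N) n p t\<bar> < \<delta>"
    using bernstein_conv[OF x0N cp d0] by blast
  define n where "n = max n0 1"
  define b where "b = bernstein (x 0) (x N) n p"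
  have ne: "x 0 \<noteq> x N" using x0N by simp
  have cb: "continuous_on {x 0..x N} b" unfolding b_def by (rule bernstein_cont[OF ne])
  have b0: "b (x 0) = p (x 0)" unfolding b_def by (rule bernstein_left[OF ne])
  have bN: "b (x N) = p (x N)" unfolding b_def by (rule bernstein_right[OF ne]) (simp add: n_def)
  have D: "\<forall>y\<in>{x 0..x N}. \<bar>p y - b y\<bar> \<le> \<delta>"
    using n0[of n] unfolding b_def n_def by (auto intro: less_imp_le)
  define g where "g = fractal_fun x N \<alpha> p b"
  have est: "\<forall>y\<in>{x 0..x N}. \<bar>g y - p y\<bar> \<le> M * \<delta> / (1 - M)"
    unfolding g_def by (rule estimate[OF cp cb b0 bN D])
  have "g \<in> fractal_trig_rat x N \<alpha> n"
    unfolding fractal_trig_rat_def g_def b_def fractal_op_def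
    using Tind_trig_rat[OF p(1)] by blast
  moreover have "n \<in> {1..}" by (simp add: n_def)
  moreover have "\<bar>f t - g t\<bar> < \<epsilon>" if t: "t \<in> {-pi..pi}" for t
  proof -
    have "\<bar>g t - p t\<bar> \<le> K * \<delta>" using est t I by (simp add: K_def)
    then show ?thesis using p(2)[OF t] Kd by linarith
  qed
  ultimately show "\<exists>g\<in>(\<Union>n\<in>{1..}. fractal_trig_rat x N \<alpha> n). \<forall>t\<in>{-pi..pi}. \<bar>f t - g t\<bar> < \<epsilon>"
    by blast
qed

end
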